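(* Let $X$ be a list of program variables of type $T$ and $U$ a list of unentangled ghosts of type $T$, and $\mathbf{u}$ an unentangled ghost of type $T$. Then $X\equiv_q U$ and $\mathrm{separable}(X):=(X\equiv_q\mathbf{u})$ are $\ell^2[X]$-disentangling, and $X\equiv_{cl}U$ and $\mathrm{class}(X):=(X\equiv_{cl}\mathbf{u})$ are $\{|i\rangle\}_{i\in T}$-disentangling.
   Context: $\ell^2[V]$ is the Hilbert space with orthonormal basis indexed by assignments on the variable set $V$ (quantum memories over $V$); $\ell^2[V\cup W]\cong\ell^2[V]\otimes\ell^2[W]$. A predicate is a closed subspace; predicates over different variable sets are identified if they agree after tensoring with the full spaces of missing variables. Quantum equality: for disjoint lists $W,W'\subseteq V$ of the same type, $W\equiv_q W'$ is the set of $\psi\in\ell^2[V]$ invariant under the unitary swapping the contents of $W$ and $W'$. Classical equality: $W\equiv_{cl}W'$ is the closed span of all $|i\rangle_W\otimes|i\rangle_{W'}\otimes\psi$ with $\psi$ a quantum memory over $V\setminus(W\cup W')$. Disentangling: a predicate $A$ on $X\cup U$ ($X$ program variables, $U$ unentangled ghosts) is $M$-disentangling, for a set $M\subseteq\ell^2[X]$, iff for every set of variables $V$ disjoint from $X\cup U$, all quantum memories $\psi_{VX}\ne0$ over $V\cup X$ and $\psi_U\ne0$ over $U$ with $\psi_{VX}\otimes\psi_U\in A$, we have $\psi_{VX}=\psi_V\otimes\psi_X$ for some $\psi_V\in\ell^2[V]$ and some $\psi_X\in M$. *)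

theory Defs
  imports "HOL-Analysis.Analysis"
begin

text \<open>Quantum memories over a set of variables whose joint assignments form the type 'a
  are modelled as functions 'a \<Rightarrow> complex; l2[V] is the set of square-summable ones.
  l2[V \<union> W] = l2[V] \<otimes> l2[W] is modelled via the product type of assignments.\<close>

definition is_ell2 :: "('a \<Rightarrow> complex) \<Rightarrow> bool" where
  "is_ell2 \<psi> \<longleftrightarrow> (\<lambda>a. (cmod (\<psi> a))\<^sup>2) summable_on UNIV"

definition ell2_norm :: "('a \<Rightarrow> complex) \<Rightarrow> real" where
  "ell2_norm \<psi> = sqrt (\<Sum>\<^sub>\<infinity>a. (cmod (\<psi> a))\<^sup>2)"

definition tensor :: "('a \<Rightarrow> complex) \<Rightarrow> ('b \<Rightarrow> complex) \<Rightarrow> ('a \<times> 'b \<Rightarrow> complex)" where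
  "tensor f g = (\<lambda>(a, b). f a * g b)"

definition ket :: "'a \<Rightarrow> 'a \<Rightarrow> complex" where
  "ket i = (\<lambda>a. if a = i then 1 else 0)"

definition cspan :: "('a \<Rightarrow> complex) set \<Rightarrow> ('a \<Rightarrow> complex) set" where
  "cspan S = {f. \<exists>F c. finite F \<and> F \<subseteq> S \<and> f = (\<lambda>a. \<Sum>g\<in>F. c g * g a)}"

definition ell2_closure :: "('a \<Rightarrow> complex) set \<Rightarrow> ('a \<Rightarrow> complex) set" where
  "ell2_closure S = {f. is_ell2 f \<and> (\<forall>e>0. \<exists>g\<in>S. ell2_norm (\<lambda>a. f a - g a) < e)}"

definition ccspan :: "('a \<Rightarrow> complex) set \<Rightarrow> ('a \<Rightarrow> complex) set" where
  "ccspan S = ell2_closure (cspan S)"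

text \<open>Memory layout for predicates on V \<union> X \<union> W: assignments ((v, x), w), where
  X and W have the same type 'x and V (type 'v) is the set of all other variables.\<close>

definition swap_XW :: "(('v \<times> 'x) \<times> 'x \<Rightarrow> complex) \<Rightarrow> (('v \<times> 'x) \<times> 'x \<Rightarrow> complex)" where
  "swap_XW \<psi> = (\<lambda>((v, x), w). \<psi> ((v, w), x))"

definition quantum_eq :: "(('v \<times> 'x) \<times> 'x \<Rightarrow> complex) set" where
  "quantum_eq = {\<psi>. is_ell2 \<psi> \<and> swap_XW \<psi> = \<psi>}"

definition classical_eq :: "(('v \<times> 'x) \<times> 'x \<Rightarrow> complex) set" where
  "classical_eq = ccspan {tensor (tensor \<psi> (ket i)) (ket i) | \<psi> i. is_ell2 \<psi>}"

text \<open>separable(X) := X \<equiv>q u and class(X) := X \<equiv>cl u for a single ghost u of type T.\<close>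
definition separable :: "(('v \<times> 'x) \<times> 'x \<Rightarrow> complex) set" where
  "separable = quantum_eq"

definition classX :: "(('v \<times> 'x) \<times> 'x \<Rightarrow> complex) set" where
  "classX = classical_eq"

text \<open>The predicate A is given in its version on V \<union> X \<union> U
  (predicates are identified up to tensoring with full spaces); the type 'v of
  assignments of V is universally quantified at the level of theorems.\<close>
definition disentangling ::
  "(('v \<times> 'x) \<times> 'u \<Rightarrow> complex) set \<Rightarrow> ('x \<Rightarrow> complex) set \<Rightarrow> bool" where
  "disentangling A M \<longleftrightarrow>
     (\<forall>\<psi>VX \<psi>U. is_ell2 \<psi>VX \<and> \<psi>VX \<noteq> (\<lambda>_. 0) \<and> is_ell2 \<psi>U \<and> \<psi>U \<noteq> (\<lambda>_. 0)
        \<and> tensor \<psi>VX \<psi>U \<in> A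
        \<longrightarrow> (\<exists>\<psi>V \<psi>X. is_ell2 \<psi>V \<and> \<psi>X \<in> M \<and> \<psi>VX = tensor \<psi>V \<psi>X))"

end

theory Submission
  imports Defs
begin

lemma ell2_zero: "is_ell2 (\<lambda>_. 0)"
  unfolding is_ell2_def by simp

lemma ell2_cmult: assumes "is_ell2 f" shows "is_ell2 (\<lambda>a. c * f a)"
proof -
  have "(\<lambda>a. (cmod c)\<^sup>2 * (cmod (f a))\<^sup>2) summable_on UNIV"
    using assms unfolding is_ell2_def by (rule summable_on_cmult_right)
  then show ?thesis unfolding is_ell2_def by (simp add: norm_mult power_mult_distrib)
qed

lemma sq2: "((x::real) + y)\<^sup>2 \<le> 2 * x\<^sup>2 + 2 * y\<^sup>2"
proof -
  have "0 \<le> (x - y)\<^sup>2" by simp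
  then show ?thesis by (simp add: power2_diff power2_sum)
qed
lemma sq_tri: "(cmod (a + b))\<^sup>2 \<le> 2 * (cmod a)\<^sup>2 + 2 * (cmod b)\<^sup>2"
proof -
  have "cmod (a + b) \<le> cmod a + cmod b" by (rule norm_triangle_ineq)
  then have "(cmod (a + b))\<^sup>2 \<le> (cmod a + cmod b)\<^sup>2"
    by (simp add: power_mono)
  also have "\<dots> \<le> 2 * (cmod a)\<^sup>2 + 2 * (cmod b)\<^sup>2" by (rule sq2)
  finally show ?thesis .
qed

lemma ell2_add: assumes "is_ell2 f" "is_ell2 g" shows "is_ell2 (\<lambda>a. f a + g a)"
proof -
  have "(\<lambda>a. 2 * (cmod (f a))\<^sup>2 + 2 * (cmod (g a))\<^sup>2) summable_on UNIV"
    using assms unfolding is_ell2_def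
    by (intro summable_on_add summable_on_cmult_right)
  then show ?thesis unfolding is_ell2_def
    by (rule summable_on_comparison_test) (auto simp: sq_tri)
qed

lemma ell2_sum: assumes "finite F" "\<And>g. g \<in> F \<Longrightarrow> is_ell2 g"
  shows "is_ell2 (\<lambda>a. \<Sum>g\<in>F. c g * g a)"
  using assms
proof (induction F rule: finite_induct)
  case empty then show ?case by (simp add: ell2_zero)
next
  case (insert x F)
  have "is_ell2 (\<lambda>a. c x * x a + (\<Sum>g\<in>F. c g * g a))"
    using insert by (intro ell2_add ell2_cmult) auto
  then show ?case using insert by simp
qed

lemma ell2_slice:
  fixes F :: "'v \<times> 'x \<Rightarrow> complex"
  assumes "is_ell2 F" shows "is_ell2 (\<lambda>v. F (v, w))"
proof -
  have "(\<lambda>a. (cmod (F a))\<^sup>2) summable_on (\<lambda>v. (v, w)) ` UNIV"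
    using assms unfolding is_ell2_def by (rule summable_on_subset_banach) auto
  then have "((\<lambda>a. (cmod (F a))\<^sup>2) \<circ> (\<lambda>v. (v, w))) summable_on UNIV"
    by (subst (asm) summable_on_reindex) (auto simp: inj_on_def)
  then show ?thesis unfolding is_ell2_def by (simp add: o_def)
qed

lemma ell2_gen:
  fixes \<psi> :: "'v \<Rightarrow> complex" and i :: 'x
  assumes "is_ell2 \<psi>" shows "is_ell2 (tensor (tensor \<psi> (ket i)) (ket i))"
proof -
  have "((\<lambda>v. (cmod (\<psi> v))\<^sup>2)) summable_on UNIV" using assms unfolding is_ell2_def .
  then have "((\<lambda>a. (cmod (tensor (tensor \<psi> (ket i)) (ket i) a))\<^sup>2) \<circ> (\<lambda>v. ((v, i), i))) summable_on UNIV"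
    by (simp add: o_def tensor_def ket_def)
  then have "(\<lambda>a. (cmod (tensor (tensor \<psi> (ket i)) (ket i) a))\<^sup>2) summable_on range (\<lambda>v. ((v, i), i))"
    by (subst summable_on_reindex) (auto simp: inj_on_def)
  then show ?thesis unfolding is_ell2_def
    by (subst (asm) summable_on_cong_neutral[where T=UNIV and
          g="\<lambda>a. (cmod (tensor (tensor \<psi> (ket i)) (ket i) a))\<^sup>2"])
       (auto simp: tensor_def ket_def image_iff)
qed

lemma ell2_point: assumes "is_ell2 h" shows "cmod (h a) \<le> ell2_norm h"
proof -
  have "(\<Sum>\<^sub>\<infinity>b\<in>{a}. (cmod (h b))\<^sup>2) \<le> (\<Sum>\<^sub>\<infinity>b. (cmod (h b))\<^sup>2)"
    using assms unfolding is_ell2_def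
    by (intro infsum_mono_neutral) auto
  then have "(cmod (h a))\<^sup>2 \<le> (\<Sum>\<^sub>\<infinity>b. (cmod (h b))\<^sup>2)" by simp
  then show ?thesis unfolding ell2_norm_def by (simp add: real_le_rsqrt)
qed

lemma classical_eq_diag:
  assumes "f \<in> (classical_eq :: (('v \<times> 'x) \<times> 'x \<Rightarrow> complex) set)" "x \<noteq> w"
  shows "f ((v, x), w) = 0"
proof (rule ccontr)
  assume nz: "f ((v, x), w) \<noteq> 0"
  define S where "S = {tensor (tensor \<psi> (ket (i::'x))) (ket i) | \<psi> i. is_ell2 (\<psi>::'v\<Rightarrow>complex)}"
  have fe: "is_ell2 f" and cl: "\<forall>e>0. \<exists>g\<in>cspan S. ell2_norm (\<lambda>a. f a - g a) < e"
    using assms(1) unfolding classical_eq_def ccspan_def ell2_closure_def S_def by auto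
  have pos: "cmod (f ((v, x), w)) > 0" using nz by simp
  from cl[rule_format, OF pos] obtain g where gS: "g \<in> cspan S"
    and gn: "ell2_norm (\<lambda>a. f a - g a) < cmod (f ((v, x), w))" by blast
  from gS obtain F c where F: "finite F" "F \<subseteq> S"
    and g: "g = (\<lambda>a. \<Sum>h\<in>F. c h * h a)" unfolding cspan_def by blast
  have ge: "is_ell2 g" unfolding g using F
    by (intro ell2_sum) (auto simp: S_def intro: ell2_gen)
  have g0: "g ((v, x), w) = 0" unfolding g
  proof (rule sum.neutral, rule ballI)
    fix h assume hF: "h \<in> F"
    obtain \<psi> i where "h = tensor (tensor \<psi> (ket i)) (ket i)" using F(2) hF unfolding S_def by blast
    then show "c h * h ((v, x), w) = 0" using assms(2) by (auto simp: tensor_def ket_def)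
  qed
  have "is_ell2 (\<lambda>a. f a - g a)"
    using ell2_add[OF fe ell2_cmult[OF ge, of "-1"]] by simp
  from ell2_point[OF this, of "((v, x), w)"] gn g0 show False by simp
qed

lemma part_q: "disentangling (quantum_eq :: (('v \<times> 'x) \<times> 'x \<Rightarrow> complex) set) {\<psi>. is_ell2 \<psi>}"
  unfolding disentangling_def
proof (intro allI impI)
  fix \<psi>VX :: "'v \<times> 'x \<Rightarrow> complex" and \<psi>U :: "'x \<Rightarrow> complex"
  assume a: "is_ell2 \<psi>VX \<and> \<psi>VX \<noteq> (\<lambda>_. 0) \<and> is_ell2 \<psi>U \<and> \<psi>U \<noteq> (\<lambda>_. 0) \<and> tensor \<psi>VX \<psi>U \<in> quantum_eq"
  then obtain w0 where w0: "\<psi>U w0 \<noteq> 0" by auto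
  have sw: "swap_XW (tensor \<psi>VX \<psi>U) = tensor \<psi>VX \<psi>U" using a unfolding quantum_eq_def by auto
  have eq: "\<psi>VX (v, w0) * \<psi>U x = \<psi>VX (v, x) * \<psi>U w0" for v x
    using fun_cong[OF sw, of "((v, x), w0)"] by (simp add: swap_XW_def tensor_def)
  define \<psi>V where "\<psi>V = (\<lambda>v. inverse (\<psi>U w0) * \<psi>VX (v, w0))"
  have "is_ell2 \<psi>V" unfolding \<psi>V_def using a by (intro ell2_cmult ell2_slice) auto
  moreover have "\<psi>VX = tensor \<psi>V \<psi>U"
  proof
    fix p show "\<psi>VX p = tensor \<psi>V \<psi>U p"
    proof (cases p)
      case (Pair v x)
      then show ?thesis using eq[of v x] w0
        by (simp add: tensor_def \<psi>V_def field_simps)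
    qed
  qed
  ultimately show "\<exists>\<psi>V \<psi>X. is_ell2 \<psi>V \<and> \<psi>X \<in> {\<psi>. is_ell2 \<psi>} \<and> \<psi>VX = tensor \<psi>V \<psi>X"
    using a by blast
qed

lemma part_c: "disentangling (classical_eq :: (('v \<times> 'x) \<times> 'x \<Rightarrow> complex) set) (range ket)"
  unfolding disentangling_def
proof (intro allI impI)
  fix \<psi>VX :: "'v \<times> 'x \<Rightarrow> complex" and \<psi>U :: "'x \<Rightarrow> complex"
  assume a: "is_ell2 \<psi>VX \<and> \<psi>VX \<noteq> (\<lambda>_. 0) \<and> is_ell2 \<psi>U \<and> \<psi>U \<noteq> (\<lambda>_. 0) \<and> tensor \<psi>VX \<psi>U \<in> classical_eq"
  then obtain w0 where w0: "\<psi>U w0 \<noteq> 0" by auto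
  have z: "\<psi>VX (v, x) = 0" if "x \<noteq> w0" for v x
    using classical_eq_diag[of "tensor \<psi>VX \<psi>U" x w0 v] a that w0 by (simp add: tensor_def)
  define \<psi>V where "\<psi>V = (\<lambda>v. \<psi>VX (v, w0))"
  have "is_ell2 \<psi>V" unfolding \<psi>V_def using a by (intro ell2_slice) auto
  moreover have "\<psi>VX = tensor \<psi>V (ket w0)"
  proof
    fix p show "\<psi>VX p = tensor \<psi>V (ket w0) p"
      by (cases p) (auto simp: tensor_def \<psi>V_def ket_def z)
  qed
  ultimately show "\<exists>\<psi>V \<psi>X. is_ell2 \<psi>V \<and> \<psi>X \<in> range ket \<and> \<psi>VX = tensor \<psi>V \<psi>X"
    by blast
qed

theorem lemma11:
  shows "disentangling (quantum_eq :: (('v \<times> 'x) \<times> 'x \<Rightarrow> complex) set) {\<psi>. is_ell2 \<psi>}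
       \<and> disentangling (separable :: (('v \<times> 'x) \<times> 'x \<Rightarrow> complex) set) {\<psi>. is_ell2 \<psi>}
       \<and> disentangling (classical_eq :: (('v \<times> 'x) \<times> 'x \<Rightarrow> complex) set) (range ket)
       \<and> disentangling (classX :: (('v \<times> 'x) \<times> 'x \<Rightarrow> complex) set) (range ket)"
  using part_q part_c unfolding separable_def classX_def by blast

end
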